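(* Let $\Lambda$ be a finite, strongly connected $k$-graph with no sources, and let $p$ be a probability measure on $\Lambda^\infty$ such that (a) the standard prefixing maps $\sigma_\lambda$ ($\lambda\in\Lambda$) and coding maps $\sigma^n$ ($n\in\mathbb N^k$) are measurable; (b) $p(Z(v))>0$ for every $v\in\Lambda^0$; (c) for every edge $\lambda$ (i.e. $\lambda\in\Lambda^{e_i}$ for some $i$), $p\circ\sigma_\lambda\ll p$ on $Z(s(\lambda))$ and the Radon–Nikodym derivative $\Phi_{\sigma_\lambda}=d(p\circ\sigma_\lambda)/dp$ is strictly positive $p$-a.e. on $Z(s(\lambda))$. Then the sets $D_\lambda=Z(s(\lambda))$, the maps $\sigma_\lambda$ and the maps $\sigma^n$ form a $\Lambda$-semibranching function system on $(\Lambda^\infty,p)$.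
   Context: $k$-graph: countable small category $\Lambda$ with degree functor $d:\Lambda\to\mathbb N^k$ with unique factorization; vertices $\Lambda^0$, range/source $r,s$; finite (each $\Lambda^n$ finite), no sources, strongly connected ($v\Lambda w\neq\emptyset$ for all vertices). $\Lambda^\infty$: infinite paths, i.e. degree-preserving functors $x:\Omega_k\to\Lambda$ ($\Omega_k$: morphisms $(p,q)$, $p\le q$ in $\mathbb N^k$, $d(p,q)=q-p$), $r(x)=x(0,0)$; cylinder sets $Z(\lambda)=\{x:x(0,d(\lambda))=\lambda\}$ form a compact open basis, with associated Borel $\sigma$-algebra. Standard coding maps: $\sigma^m(x)(p,q)=x(p+m,q+m)$. Standard prefixing maps: $\sigma_\lambda:Z(s(\lambda))\to Z(\lambda)$, $\sigma_\lambda(x)=\lambda x$, the unique infinite path with $(\lambda x)(0,d(\lambda))=\lambda$ and $\sigma^{d(\lambda)}(\lambda x)=x$. A semibranching function system on $(X,\mu)$ is a finite family of measurable maps $\tau_i:D_i\to X$, $R_i=\tau_i(D_i)$, with $\mu(X\setminus\bigcup R_i)=0$, $\mu(R_i\cap R_j)=0$ ($i\ne j$), and $d(\mu\circ\tau_i)/d\mu>0$ a.e. on $D_i$; $\tau$ is a coding map if $\tau\circ\tau_i=\mathrm{id}_{D_i}$. A $\Lambda$-semibranching function system on $(X,\mu)$: sets $D_\lambda$, prefixing maps $\tau_\lambda:D_\lambda\to X$, coding maps $\tau^m$ with (a) each $\{\tau_\lambda\}_{\lambda\in\Lambda^m}$ a semibranching function system with coding map $\tau^m$; (b) $\tau_v=\mathrm{id}$,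 $\mu(D_v)>0$; (c) $R_\nu\subseteq D_\lambda$ a.e. and $\tau_\lambda\tau_\nu=\tau_{\lambda\nu}$ a.e. for $\nu\in s(\lambda)\Lambda$; (d) $\tau^m\tau^n=\tau^{m+n}$. *)

theory Defs
  imports "HOL-Probability.Probability_Measure"
begin

text \<open>A k-graph is given by a set of morphisms, range and source maps, a (partial)
composition, and a degree functor into N^k, where N^k is represented as
functions 'k => nat for a finite type 'k with k = CARD('k) elements.
Objects are identified with identity morphisms (the vertices).
Composition convention: cmp l n is defined when src l = rng n.\<close>

record ('a, 'k) kgraph =
  mor :: "'a set"
  rng :: "'a \<Rightarrow> 'a"
  src :: "'a \<Rightarrow> 'a"
  cmp :: "'a \<Rightarrow> 'a \<Rightarrow> 'a"
  deg :: "'a \<Rightarrow> ('k \<Rightarrow> nat)"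

definition is_kgraph :: "('a, 'k::finite) kgraph \<Rightarrow> bool" where
  "is_kgraph G \<longleftrightarrow>
     countable (mor G) \<and>
     (\<forall>l\<in>mor G. rng G l \<in> mor G \<and> src G l \<in> mor G) \<and>
     (\<forall>l\<in>mor G. rng G (rng G l) = rng G l \<and> src G (rng G l) = rng G l \<and>
                 rng G (src G l) = src G l \<and> src G (src G l) = src G l) \<and>
     (\<forall>l\<in>mor G. cmp G (rng G l) l = l \<and> cmp G l (src G l) = l) \<and>
     (\<forall>l\<in>mor G. \<forall>n\<in>mor G. src G l = rng G n \<longrightarrow>
         cmp G l n \<in> mor G \<and> rng G (cmp G l n) = rng G l \<and> src G (cmp G l n) = src G n \<and>
         deg G (cmp G l n) = (\<lambda>i. deg G l i + deg G n i)) \<and>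
     (\<forall>l\<in>mor G. \<forall>n\<in>mor G. \<forall>q\<in>mor G. src G l = rng G n \<longrightarrow> src G n = rng G q \<longrightarrow>
         cmp G (cmp G l n) q = cmp G l (cmp G n q)) \<and>
     (\<forall>l\<in>mor G. \<forall>m n. deg G l = (\<lambda>i. m i + n i) \<longrightarrow>
         (\<exists>!(a, b). a \<in> mor G \<and> b \<in> mor G \<and> src G a = rng G b \<and>
                    deg G a = m \<and> deg G b = n \<and> cmp G a b = l))"

definition vertices :: "('a, 'k) kgraph \<Rightarrow> 'a set" where
  "vertices G = {v \<in> mor G. rng G v = v}"

definition paths_of_deg :: "('a, 'k) kgraph \<Rightarrow> ('k \<Rightarrow> nat) \<Rightarrow> 'a set" where
  "paths_of_deg G n = {l \<in> mor G. deg G l = n}"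

definition finite_kgraph :: "('a, 'k) kgraph \<Rightarrow> bool" where
  "finite_kgraph G \<longleftrightarrow> (\<forall>n. finite (paths_of_deg G n))"

definition no_sources :: "('a, 'k) kgraph \<Rightarrow> bool" where
  "no_sources G \<longleftrightarrow> (\<forall>v\<in>vertices G. \<forall>n. \<exists>l\<in>paths_of_deg G n. rng G l = v)"

definition strongly_connected :: "('a, 'k) kgraph \<Rightarrow> bool" where
  "strongly_connected G \<longleftrightarrow>
     (\<forall>v\<in>vertices G. \<forall>w\<in>vertices G. \<exists>l\<in>mor G. rng G l = v \<and> src G l = w)"

definition basis_deg :: "'k \<Rightarrow> ('k \<Rightarrow> nat)" where
  "basis_deg i = (\<lambda>j. if j = i then 1 else 0)"

definition edges :: "('a, 'k) kgraph \<Rightarrow> 'a set" where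
  "edges G = (\<Union>i. paths_of_deg G (basis_deg i))"

text \<open>An infinite path is a degree-preserving functor from Omega_k; the morphism
(p,q) with p <= q is sent to x p q. Outside p <= q the value is fixed to undefined
so that infinite paths are uniquely represented.\<close>

type_synonym ('a, 'k) ipath = "('k \<Rightarrow> nat) \<Rightarrow> ('k \<Rightarrow> nat) \<Rightarrow> 'a"

definition infpaths :: "('a, 'k) kgraph \<Rightarrow> ('a, 'k) ipath set" where
  "infpaths G = {x.
     (\<forall>p q. p \<le> q \<longrightarrow> x p q \<in> mor G \<and> deg G (x p q) = (\<lambda>i. q i - p i) \<and>
                     rng G (x p q) = x p p \<and> src G (x p q) = x q q) \<and>
     (\<forall>p q t. p \<le> q \<longrightarrow> q \<le> t \<longrightarrow> cmp G (x p q) (x q t) = x p t) \<and>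
     (\<forall>p q. \<not> p \<le> q \<longrightarrow> x p q = undefined)}"

definition cyl :: "('a, 'k) kgraph \<Rightarrow> 'a \<Rightarrow> ('a, 'k) ipath set" where
  "cyl G l = {x \<in> infpaths G. x (\<lambda>_. 0) (deg G l) = l}"

definition shift :: "('k \<Rightarrow> nat) \<Rightarrow> ('a, 'k) ipath \<Rightarrow> ('a, 'k) ipath" where
  "shift m x = (\<lambda>p q. x (\<lambda>i. p i + m i) (\<lambda>i. q i + m i))"

definition prefix :: "('a, 'k) kgraph \<Rightarrow> 'a \<Rightarrow> ('a, 'k) ipath \<Rightarrow> ('a, 'k) ipath" where
  "prefix G l x = (THE y. y \<in> infpaths G \<and> y (\<lambda>_. 0) (deg G l) = l \<and> shift (deg G l) y = x)"

text \<open>The Borel sigma-algebra of the cylinder topology on Lambda^infty (the cylinders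
form a countable basis, so it is generated by the cylinders).\<close>
definition path_sets :: "('a, 'k) kgraph \<Rightarrow> ('a, 'k) ipath set set" where
  "path_sets G = sigma_sets (infpaths G) (cyl G ` mor G)"

definition comp_measure :: "'x measure \<Rightarrow> 'x set \<Rightarrow> ('x \<Rightarrow> 'x) \<Rightarrow> 'x measure" where
  "comp_measure M D f =
     measure_of D (sets (restrict_space M D)) (\<lambda>A. emeasure M (f ` A))"

definition sbfs :: "'x measure \<Rightarrow> 'i set \<Rightarrow> ('i \<Rightarrow> 'x set) \<Rightarrow> ('i \<Rightarrow> 'x \<Rightarrow> 'x) \<Rightarrow> bool" where
  "sbfs M I D \<tau> \<longleftrightarrow>
     finite I \<and>
     (\<forall>i\<in>I. D i \<in> sets M \<and> \<tau> i \<in> restrict_space M (D i) \<rightarrow>\<^sub>M M \<and>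
        (\<forall>A\<in>sets M. A \<subseteq> D i \<longrightarrow> \<tau> i ` A \<in> sets M) \<and>
        absolutely_continuous (restrict_space M (D i)) (comp_measure M (D i) (\<tau> i)) \<and>
        (AE x in restrict_space M (D i).
           RN_deriv (restrict_space M (D i)) (comp_measure M (D i) (\<tau> i)) x > 0)) \<and>
     emeasure M (space M - (\<Union>i\<in>I. \<tau> i ` D i)) = 0 \<and>
     (\<forall>i\<in>I. \<forall>j\<in>I. i \<noteq> j \<longrightarrow> emeasure M (\<tau> i ` D i \<inter> \<tau> j ` D j) = 0)"

definition coding_map :: "'i set \<Rightarrow> ('i \<Rightarrow> 'x set) \<Rightarrow> ('i \<Rightarrow> 'x \<Rightarrow> 'x) \<Rightarrow> ('x \<Rightarrow> 'x) \<Rightarrow> bool" where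
  "coding_map I D \<tau> c \<longleftrightarrow> (\<forall>i\<in>I. \<forall>x\<in>D i. c (\<tau> i x) = x)"

definition Lambda_sbfs ::
  "('a, 'k) kgraph \<Rightarrow> 'x measure \<Rightarrow> ('a \<Rightarrow> 'x set) \<Rightarrow> ('a \<Rightarrow> 'x \<Rightarrow> 'x) \<Rightarrow>
   (('k \<Rightarrow> nat) \<Rightarrow> 'x \<Rightarrow> 'x) \<Rightarrow> bool" where
  "Lambda_sbfs G M D \<tau> c \<longleftrightarrow>
     (\<forall>m. sbfs M (paths_of_deg G m) D \<tau> \<and> coding_map (paths_of_deg G m) D \<tau> (c m)) \<and>
     (\<forall>v\<in>vertices G. (\<forall>x\<in>D v. \<tau> v x = x) \<and> emeasure M (D v) > 0) \<and>
     (\<forall>l\<in>mor G. \<forall>n\<in>mor G. src G l = rng G n \<longrightarrow>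
        (AE x in M. x \<in> \<tau> n ` D n \<longrightarrow> x \<in> D l) \<and>
        (AE x in M. x \<in> D n \<longrightarrow> \<tau> l (\<tau> n x) = \<tau> (cmp G l n) x)) \<and>
     (\<forall>m n. \<forall>x\<in>space M. c m (c n x) = c (\<lambda>i. m i + n i) x)"

end

theory Submission
  imports Defs
begin

lemma kg_mor: "is_kgraph G \<Longrightarrow> l \<in> mor G \<Longrightarrow> rng G l \<in> mor G \<and> src G l \<in> mor G"
  by (drule is_kgraph_def[THEN iffD1, THEN conjunct2, THEN conjunct1]) blast
lemma kg_rs: "is_kgraph G \<Longrightarrow> l \<in> mor G \<Longrightarrow> rng G (rng G l) = rng G l \<and> src G (rng G l) = rng G l \<and>
                 rng G (src G l) = src G l \<and> src G (src G l) = src G l"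
  by (drule is_kgraph_def[THEN iffD1, THEN conjunct2, THEN conjunct2, THEN conjunct1]) blast
lemma kg_id: "is_kgraph G \<Longrightarrow> l \<in> mor G \<Longrightarrow> cmp G (rng G l) l = l \<and> cmp G l (src G l) = l"
  by (drule is_kgraph_def[THEN iffD1, THEN conjunct2, THEN conjunct2, THEN conjunct2, THEN conjunct1]) blast
lemma kg_cmp: "is_kgraph G \<Longrightarrow> l \<in> mor G \<Longrightarrow> n \<in> mor G \<Longrightarrow> src G l = rng G n \<Longrightarrow>
         cmp G l n \<in> mor G \<and> rng G (cmp G l n) = rng G l \<and> src G (cmp G l n) = src G n \<and>
         deg G (cmp G l n) = (\<lambda>i. deg G l i + deg G n i)"
  by (drule is_kgraph_def[THEN iffD1, THEN conjunct2, THEN conjunct2, THEN conjunct2, THEN conjunct2, THEN conjunct1]) blast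
lemma kg_assoc: "is_kgraph G \<Longrightarrow> l\<in>mor G \<Longrightarrow> n\<in>mor G \<Longrightarrow> q\<in>mor G \<Longrightarrow> src G l = rng G n \<Longrightarrow> src G n = rng G q \<Longrightarrow>
         cmp G (cmp G l n) q = cmp G l (cmp G n q)"
  by (drule is_kgraph_def[THEN iffD1, THEN conjunct2, THEN conjunct2, THEN conjunct2, THEN conjunct2, THEN conjunct2, THEN conjunct1]) blast
lemma kg_uf: "is_kgraph G \<Longrightarrow> l\<in>mor G \<Longrightarrow> deg G l = (\<lambda>i. m i + n i) \<Longrightarrow>
         (\<exists>!(a, b). a \<in> mor G \<and> b \<in> mor G \<and> src G a = rng G b \<and>
                    deg G a = m \<and> deg G b = n \<and> cmp G a b = l)"
  by (drule is_kgraph_def[THEN iffD1, THEN conjunct2, THEN conjunct2, THEN conjunct2, THEN conjunct2, THEN conjunct2, THEN conjunct2]) blast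

definition fac :: "('a,'k) kgraph \<Rightarrow> 'a \<Rightarrow> ('k\<Rightarrow>nat) \<Rightarrow> 'a \<times> 'a" where
 "fac G l r = (THE (a,b). a \<in> mor G \<and> b \<in> mor G \<and> src G a = rng G b \<and> deg G a = r \<and>
     deg G b = (\<lambda>i. deg G l i - r i) \<and> cmp G a b = l)"

definition pre where "pre G l r = fst (fac G l r)"
definition suf where "suf G l r = snd (fac G l r)"

lemma fac_spec:
  assumes G: "is_kgraph G" and l: "l \<in> mor G" and r: "r \<le> deg G l"
  shows "pre G l r \<in> mor G \<and> suf G l r \<in> mor G \<and> src G (pre G l r) = rng G (suf G l r) \<and>
     deg G (pre G l r) = r \<and> deg G (suf G l r) = (\<lambda>i. deg G l i - r i) \<and> cmp G (pre G l r) (suf G l r) = l"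
proof -
  have "deg G l = (\<lambda>i. r i + (deg G l i - r i))" using r by (auto simp: le_fun_def)
  from kg_uf[OF G l this] have ex1: "\<exists>!(a, b). a \<in> mor G \<and> b \<in> mor G \<and> src G a = rng G b \<and> deg G a = r \<and>
     deg G b = (\<lambda>i. deg G l i - r i) \<and> cmp G a b = l" .
  have "(\<lambda>(a,b). a \<in> mor G \<and> b \<in> mor G \<and> src G a = rng G b \<and> deg G a = r \<and>
     deg G b = (\<lambda>i. deg G l i - r i) \<and> cmp G a b = l) (fac G l r)"
    unfolding fac_def by (rule theI'[OF ex1])
  then show ?thesis unfolding pre_def suf_def by (cases "fac G l r") simp
qed

lemma fac_uniq:
  assumes G: "is_kgraph G" and a: "a \<in> mor G" and b: "b \<in> mor G" and ab: "src G a = rng G b"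
  shows "pre G (cmp G a b) (deg G a) = a" "suf G (cmp G a b) (deg G a) = b"
proof -
  note c = kg_cmp[OF G a b ab]
  have u: "\<exists>!(a', b'). a' \<in> mor G \<and> b' \<in> mor G \<and> src G a' = rng G b' \<and>
                    deg G a' = deg G a \<and> deg G b' = deg G b \<and> cmp G a' b' = cmp G a b"
    using kg_uf[OF G, of "cmp G a b" "deg G a" "deg G b"] c by blast
  have dd: "(\<lambda>i. deg G (cmp G a b) i - deg G a i) = deg G b" using c by auto
  have "fac G (cmp G a b) (deg G a) = (a,b)"
    unfolding fac_def dd
    apply (rule the1_equality[OF u])
    using a b ab by auto
  then show "pre G (cmp G a b) (deg G a) = a" "suf G (cmp G a b) (deg G a) = b"
    unfolding pre_def suf_def by auto
qed

lemma vert_deg: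
  assumes G: "is_kgraph G" and v: "v \<in> mor G" and rv: "rng G v = v"
  shows "deg G v = (\<lambda>_. 0)"
proof -
  have sv: "src G v = v" using kg_rs[OF G v] rv by simp
  have "cmp G v v = v" using kg_id[OF G v] rv by simp
  moreover have "deg G (cmp G v v) = (\<lambda>i. deg G v i + deg G v i)" using kg_cmp[OF G v v] sv rv by simp
  ultimately have "deg G v = (\<lambda>i. deg G v i + deg G v i)" by simp
  then have "\<And>i. deg G v i = deg G v i + deg G v i" by metis
  then show ?thesis by fastforce
qed

lemma deg_rng: "is_kgraph G \<Longrightarrow> l \<in> mor G \<Longrightarrow> deg G (rng G l) = (\<lambda>_. 0)"
  by (meson kg_mor kg_rs vert_deg)
lemma deg_src: "is_kgraph G \<Longrightarrow> l \<in> mor G \<Longrightarrow> deg G (src G l) = (\<lambda>_. 0)"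
  using kg_mor kg_rs vert_deg by metis

lemma deg0_vertex:
  assumes G: "is_kgraph G" and l: "l \<in> mor G" and d: "deg G l = (\<lambda>_. 0)"
  shows "rng G l = l" "src G l = l"
proof -
  define P where "P = (\<lambda>(a, b). a \<in> mor G \<and> b \<in> mor G \<and> src G a = rng G b \<and>
                    deg G a = (\<lambda>_. 0::nat) \<and> deg G b = (\<lambda>_. 0::nat) \<and> cmp G a b = l)"
  have u: "\<exists>!z. P z"
    using kg_uf[OF G l, of "\<lambda>_. 0" "\<lambda>_. 0"] d unfolding P_def by simp
  have p1: "P (rng G l, l)"
    using kg_mor[OF G l] kg_rs[OF G l] deg_rng[OF G l] d kg_id[OF G l] l unfolding P_def by simp
  have p2: "P (l, src G l)"
    using kg_mor[OF G l] kg_rs[OF G l] deg_src[OF G l] d kg_id[OF G l] l unfolding P_def by simp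
  have "(rng G l, l) = (l, src G l)"
    using the1_equality[OF u p1] the1_equality[OF u p2] by simp
  then show "rng G l = l" "src G l = l" by auto
qed

lemma pre_cmp:
  assumes G: "is_kgraph G" and a: "a \<in> mor G" and b: "b \<in> mor G" and ab: "src G a = rng G b" and r: "r \<le> deg G a"
  shows "pre G (cmp G a b) r = pre G a r" "suf G (cmp G a b) r = cmp G (suf G a r) b"
proof -
  note f = fac_spec[OF G a r]
  let ?a1 = "pre G a r" and ?a2 = "suf G a r"
  have s2: "src G ?a2 = rng G b" using kg_cmp[OF G, of ?a1 ?a2] f ab by metis
  have e: "cmp G a b = cmp G ?a1 (cmp G ?a2 b)"
    using kg_assoc[OF G, of ?a1 ?a2 b] f s2 b by metis
  have c2: "cmp G ?a2 b \<in> mor G \<and> rng G (cmp G ?a2 b) = rng G ?a2" using kg_cmp[OF G _ b s2] f by blast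
  show "pre G (cmp G a b) r = pre G a r" "suf G (cmp G a b) r = cmp G (suf G a r) b"
    using fac_uniq[OF G, of ?a1 "cmp G ?a2 b"] f c2 e by auto
qed

lemma pre_cmp2:
  assumes G: "is_kgraph G" and a: "a \<in> mor G" and b: "b \<in> mor G" and ab: "src G a = rng G b" and r: "r \<le> deg G b"
  shows "pre G (cmp G a b) (\<lambda>i. deg G a i + r i) = cmp G a (pre G b r)"
        "suf G (cmp G a b) (\<lambda>i. deg G a i + r i) = suf G b r"
proof -
  note f = fac_spec[OF G b r]
  let ?b1 = "pre G b r" and ?b2 = "suf G b r"
  have r1: "rng G ?b1 = rng G b" using kg_cmp[OF G, of ?b1 ?b2] f by metis
  have e: "cmp G a b = cmp G (cmp G a ?b1) ?b2"
    using kg_assoc[OF G a, of ?b1 ?b2] f r1 ab by metis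
  have c1: "cmp G a ?b1 \<in> mor G \<and> src G (cmp G a ?b1) = src G ?b1 \<and> deg G (cmp G a ?b1) = (\<lambda>i. deg G a i + r i)"
    using kg_cmp[OF G a, of ?b1] f r1 ab by auto
  show "pre G (cmp G a b) (\<lambda>i. deg G a i + r i) = cmp G a (pre G b r)"
        "suf G (cmp G a b) (\<lambda>i. deg G a i + r i) = suf G b r"
    using fac_uniq[OF G, of "cmp G a ?b1" ?b2] f c1 e by auto
qed

lemma pre_full: "is_kgraph G \<Longrightarrow> l \<in> mor G \<Longrightarrow> pre G l (deg G l) = l \<and> suf G l (deg G l) = src G l"
  using fac_uniq[of G l "src G l"] kg_mor[of G l] kg_rs[of G l] kg_id[of G l] by simp

lemma pre_zero: "is_kgraph G \<Longrightarrow> l \<in> mor G \<Longrightarrow> suf G l (\<lambda>_. 0) = l \<and> pre G l (\<lambda>_. 0) = rng G l"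
  using fac_uniq[of G "rng G l" l] kg_mor[of G l] kg_rs[of G l] kg_id[of G l] deg_rng[of G l] by simp

lemma pre_pre:
  assumes G: "is_kgraph G" and w: "w \<in> mor G" and rs: "r \<le> s" and s: "s \<le> deg G w"
  shows "pre G (pre G w s) r = pre G w r"
proof -
  note f = fac_spec[OF G w s]
  have "pre G (cmp G (pre G w s) (suf G w s)) r = pre G (pre G w s) r"
    using pre_cmp(1)[OF G, of "pre G w s" "suf G w s" r] f rs by simp
  then show ?thesis using f by simp
qed

definition seg where "seg G w p q = suf G (pre G w q) p"

lemma seg_basic:
  assumes G: "is_kgraph G" and w: "w \<in> mor G" and pq: "p \<le> q" and q: "q \<le> deg G w"
  shows "seg G w p q \<in> mor G" "deg G (seg G w p q) = (\<lambda>i. q i - p i)"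
    "rng G (seg G w p q) = seg G w p p" "src G (seg G w p q) = seg G w q q"
proof -
  note f = fac_spec[OF G w q]
  have pq': "p \<le> deg G (pre G w q)" using f pq by simp
  note g = fac_spec[OF G _ pq'] 
  show "seg G w p q \<in> mor G" "deg G (seg G w p q) = (\<lambda>i. q i - p i)" using f g unfolding seg_def by auto
  have p: "p \<le> deg G w" using pq q order_trans by blast
  note h = fac_spec[OF G w p]
  have "seg G w p p = src G (pre G w p)"
    unfolding seg_def using pre_full[OF G, of "pre G w p"] h by simp
  also have "\<dots> = rng G (seg G w p q)"
    unfolding seg_def using g f pre_pre[OF G w pq q] by auto
  finally show "rng G (seg G w p q) = seg G w p p" by simp
  have "seg G w q q = src G (pre G w q)"
    unfolding seg_def using pre_full[OF G, of "pre G w q"] f by simp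
  also have "\<dots> = src G (seg G w p q)"
    unfolding seg_def using g f kg_cmp[OF G, of "pre G (pre G w q) p" "suf G (pre G w q) p"] by metis
  finally show "src G (seg G w p q) = seg G w q q" by simp
qed

lemma seg_trans:
  assumes G: "is_kgraph G" and w: "w \<in> mor G" and pq: "p \<le> q" and qt: "q \<le> t" and t: "t \<le> deg G w"
  shows "cmp G (seg G w p q) (seg G w q t) = seg G w p t"
proof -
  let ?u = "pre G w t"
  note fu = fac_spec[OF G w t]
  have q: "q \<le> deg G ?u" using fu qt by simp
  have p: "p \<le> deg G ?u" using fu pq qt by (metis order_trans)
  have pqu: "p \<le> deg G (pre G ?u q)" using fac_spec[OF G _ q] fu pq by simp
  note fq = fac_spec[OF G _ q]
  note fp = fac_spec[OF G _ pqu]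
  have puq: "pre G ?u q = pre G w q" using pre_pre[OF G w qt t] .
  have pup: "pre G (pre G ?u q) p = pre G ?u p" using pre_pre[OF G _ pq q] fu by simp
  have e1: "?u = cmp G (pre G ?u q) (seg G w q t)" using fq fu unfolding seg_def by simp
  have e2: "pre G ?u q = cmp G (pre G ?u p) (seg G w p q)" using fp fu fq pup puq unfolding seg_def by simp
  have fq1: "pre G ?u q \<in> mor G" using fq fu by simp
  have s1: "src G (pre G ?u p) = rng G (seg G w p q)" using fp[OF fq1] pup puq unfolding seg_def by metis
  have qw: "q \<le> deg G w" using qt t order_trans by blast
  have s2: "src G (seg G w p q) = rng G (seg G w q t)"
    using seg_basic(4)[OF G w pq qw] seg_basic(3)[OF G w qt t] by simp
  have mA: "pre G ?u p \<in> mor G" using fac_spec[OF G _ p] fu by simp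
  have mB: "seg G w p q \<in> mor G" by (rule seg_basic(1)[OF G w pq qw])
  have mC: "seg G w q t \<in> mor G" by (rule seg_basic(1)[OF G w qt t])
  have as: "cmp G (cmp G (pre G ?u p) (seg G w p q)) (seg G w q t) = cmp G (pre G ?u p) (cmp G (seg G w p q) (seg G w q t))"
    by (rule kg_assoc[OF G mA mB mC s1 s2])
  have e3: "?u = cmp G (pre G ?u p) (cmp G (seg G w p q) (seg G w q t))"
    using e1 e2 as by simp
  have m1: "cmp G (seg G w p q) (seg G w q t) \<in> mor G \<and> rng G (cmp G (seg G w p q) (seg G w q t)) = rng G (seg G w p q)"
    using kg_cmp[OF G mB mC s2] by simp
  have "suf G ?u p = cmp G (seg G w p q) (seg G w q t)"
    using fac_uniq(2)[OF G, of "pre G ?u p" "cmp G (seg G w p q) (seg G w q t)"] e3 m1 s1 fac_spec[OF G _ p] fu by simp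
  then show ?thesis unfolding seg_def by simp
qed

lemma seg_cmp:
  assumes G: "is_kgraph G" and a: "a \<in> mor G" and b: "b \<in> mor G" and ab: "src G a = rng G b" and q: "q \<le> deg G a"
  shows "seg G (cmp G a b) p q = seg G a p q"
  unfolding seg_def using pre_cmp(1)[OF G a b ab q] by simp

lemma seg_cmp2:
  assumes G: "is_kgraph G" and a: "a \<in> mor G" and b: "b \<in> mor G" and ab: "src G a = rng G b" and pq: "p \<le> q" and q: "q \<le> deg G b"
  shows "seg G (cmp G a b) (\<lambda>i. deg G a i + p i) (\<lambda>i. deg G a i + q i) = seg G b p q"
proof -
  note f = fac_spec[OF G b q]
  have r: "rng G (pre G b q) = rng G b" using kg_cmp[OF G, of "pre G b q" "suf G b q"] f by metis
  have pq': "p \<le> deg G (pre G b q)" using f pq by simp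
  show ?thesis unfolding seg_def pre_cmp2(1)[OF G a b ab q]
    using pre_cmp2(2)[OF G a _ _ pq'] f r ab by simp
qed

lemma seg_zero: "is_kgraph G \<Longrightarrow> w \<in> mor G \<Longrightarrow> q \<le> deg G w \<Longrightarrow> seg G w (\<lambda>_. 0) q = pre G w q"
  unfolding seg_def using pre_zero fac_spec by metis

lemma ip_mor: "x \<in> infpaths G \<Longrightarrow> p \<le> q \<Longrightarrow> x p q \<in> mor G \<and> deg G (x p q) = (\<lambda>i. q i - p i) \<and> rng G (x p q) = x p p \<and> src G (x p q) = x q q"
  unfolding infpaths_def by blast
lemma ip_cmp: "x \<in> infpaths G \<Longrightarrow> p \<le> q \<Longrightarrow> q \<le> t \<Longrightarrow> cmp G (x p q) (x q t) = x p t"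
  unfolding infpaths_def by blast
lemma ip_undef: "x \<in> infpaths G \<Longrightarrow> \<not> p \<le> q \<Longrightarrow> x p q = undefined"
  unfolding infpaths_def by blast

lemma zero_le_fun: "(\<lambda>_. 0::nat) \<le> p" by (simp add: le_fun_def)

lemma seg_ip:
  assumes G: "is_kgraph G" and x: "x \<in> infpaths G" and pq: "p \<le> q" and qT: "q \<le> T"
  shows "seg G (x (\<lambda>_. 0) T) p q = x p q"
proof -
  have a: "x (\<lambda>_. 0) T = cmp G (x (\<lambda>_. 0) q) (x q T)" using ip_cmp[OF x zero_le_fun qT] by simp
  have m1: "x (\<lambda>_. 0) q \<in> mor G \<and> deg G (x (\<lambda>_. 0) q) = q \<and> src G (x (\<lambda>_. 0) q) = x q q"
    using ip_mor[OF x zero_le_fun] by simp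
  have m2: "x q T \<in> mor G \<and> rng G (x q T) = x q q" using ip_mor[OF x qT] by simp
  have b: "pre G (x (\<lambda>_. 0) T) q = x (\<lambda>_. 0) q" using fac_uniq(1)[OF G, of "x (\<lambda>_. 0) q" "x q T"] a m1 m2 by simp
  have c: "x (\<lambda>_. 0) q = cmp G (x (\<lambda>_. 0) p) (x p q)" using ip_cmp[OF x zero_le_fun pq] by simp
  have m3: "x (\<lambda>_. 0) p \<in> mor G \<and> deg G (x (\<lambda>_. 0) p) = p \<and> src G (x (\<lambda>_. 0) p) = x p p"
    using ip_mor[OF x zero_le_fun] by simp
  have m4: "x p q \<in> mor G \<and> rng G (x p q) = x p p" using ip_mor[OF x pq] by simp
  have "suf G (x (\<lambda>_. 0) q) p = x p q" using fac_uniq(2)[OF G, of "x (\<lambda>_. 0) p" "x p q"] c m3 m4 by simp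
  then show ?thesis unfolding seg_def b .
qed

lemma le_shift_iff: "((\<lambda>i. p i + m i) \<le> (\<lambda>i. q i + (m i::nat))) = (p \<le> q)"
  by (simp add: le_fun_def)

lemma shift_ip:
  assumes x: "x \<in> infpaths G" shows "shift m x \<in> infpaths G"
proof -
  have A: "\<forall>p q. p \<le> q \<longrightarrow> shift m x p q \<in> mor G \<and> deg G (shift m x p q) = (\<lambda>i. q i - p i) \<and>
                     rng G (shift m x p q) = shift m x p p \<and> src G (shift m x p q) = shift m x q q"
    unfolding shift_def using ip_mor[OF x] le_shift_iff by (simp add: le_shift_iff)
  have B: "\<forall>p q t. p \<le> q \<longrightarrow> q \<le> t \<longrightarrow> cmp G (shift m x p q) (shift m x q t) = shift m x p t"
    unfolding shift_def using ip_cmp[OF x] by (simp add: le_shift_iff)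
  have C: "\<forall>p q. \<not> p \<le> q \<longrightarrow> shift m x p q = undefined"
    unfolding shift_def using ip_undef[OF x] by (simp add: le_shift_iff)
  show ?thesis unfolding infpaths_def using A B C by blast
qed

lemma shift_shift: "shift m (shift n x) = shift (\<lambda>i. m i + n i) x"
  unfolding shift_def by (simp add: add.assoc)

lemma shift_zero: "shift (\<lambda>_. 0) x = x"
  unfolding shift_def by simp

definition Wp where "Wp G l x T = cmp G l (x (\<lambda>_. 0) (\<lambda>i. T i - deg G l i))"
definition ext where "ext G l x = (\<lambda>p q. if p \<le> q then seg G (Wp G l x (\<lambda>i. max (q i) (deg G l i))) p q else undefined)"

locale ext_ctx =
  fixes G :: "('a,'k::finite) kgraph" and l x
  assumes G: "is_kgraph G" and l: "l \<in> mor G" and x: "x \<in> infpaths G" and xs: "x (\<lambda>_. 0) (\<lambda>_. 0) = src G l"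
begin

lemma W_mor:
  assumes T: "deg G l \<le> T"
  shows "Wp G l x T \<in> mor G \<and> deg G (Wp G l x T) = T \<and> rng G (Wp G l x T) = rng G l \<and>
    src G (Wp G l x T) = x (\<lambda>i. T i - deg G l i) (\<lambda>i. T i - deg G l i)"
proof -
  note m = ip_mor[OF x zero_le_fun, of "\<lambda>i. T i - deg G l i"]
  have r: "src G l = rng G (x (\<lambda>_. 0) (\<lambda>i. T i - deg G l i))" using m xs by simp
  have mm: "x (\<lambda>_. 0) (\<lambda>i. T i - deg G l i) \<in> mor G" using m[THEN conjunct1] .
  note c = kg_cmp[OF G l mm r]
  have dT: "(\<lambda>i. deg G l i + (T i - deg G l i)) = T" using T by (auto simp: le_fun_def)
  have s: "src G (x (\<lambda>_. 0) (\<lambda>i. T i - deg G l i)) = x (\<lambda>i. T i - deg G l i) (\<lambda>i. T i - deg G l i)" using m[THEN conjunct2, THEN conjunct2, THEN conjunct2] .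
  have d4: "deg G (cmp G l (x (\<lambda>_. 0) (\<lambda>i. T i - deg G l i))) = T"
  proof -
    have dx: "deg G (x (\<lambda>_. 0) (\<lambda>i. T i - deg G l i)) = (\<lambda>i. T i - deg G l i)"
      using m[THEN conjunct2, THEN conjunct1] by simp
    show ?thesis using c[THEN conjunct2, THEN conjunct2, THEN conjunct2] dx dT by simp
  qed
  have s3: "src G (cmp G l (x (\<lambda>_. 0) (\<lambda>i. T i - deg G l i))) = x (\<lambda>i. T i - deg G l i) (\<lambda>i. T i - deg G l i)"
    using c[THEN conjunct2, THEN conjunct2, THEN conjunct1] s by (rule trans)
  show ?thesis unfolding Wp_def
    using c[THEN conjunct1] c[THEN conjunct2, THEN conjunct1] d4 s3 by (intro conjI)
qed

lemma W_ext:
  assumes T: "deg G l \<le> T" and TT: "T \<le> T'"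
  shows "Wp G l x T' = cmp G (Wp G l x T) (x (\<lambda>i. T i - deg G l i) (\<lambda>i. T' i - deg G l i))"
proof -
  let ?a = "x (\<lambda>_. 0) (\<lambda>i. T i - deg G l i)" and ?b = "x (\<lambda>i. T i - deg G l i) (\<lambda>i. T' i - deg G l i)"
  have le: "(\<lambda>i. T i - deg G l i) \<le> (\<lambda>i. T' i - deg G l i)" using TT by (auto simp: le_fun_def intro: diff_le_mono)
  have e: "x (\<lambda>_. 0) (\<lambda>i. T' i - deg G l i) = cmp G ?a ?b" using ip_cmp[OF x zero_le_fun le] by simp
  have ma: "?a \<in> mor G \<and> rng G ?a = src G l \<and> src G ?a = rng G ?b" using ip_mor[OF x zero_le_fun] ip_mor[OF x le] xs by simp
  have mb: "?b \<in> mor G" using ip_mor[OF x le] by simp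
  show ?thesis unfolding Wp_def e using kg_assoc[OF G l, of ?a ?b] ma mb by simp
qed

lemma seg_W:
  assumes T: "deg G l \<le> T" and TT: "T \<le> T'" and qT: "q \<le> T"
  shows "seg G (Wp G l x T') p q = seg G (Wp G l x T) p q"
proof -
  let ?b = "x (\<lambda>i. T i - deg G l i) (\<lambda>i. T' i - deg G l i)"
  have le: "(\<lambda>i. T i - deg G l i) \<le> (\<lambda>i. T' i - deg G l i)" using TT by (auto simp: le_fun_def intro: diff_le_mono)
  show ?thesis unfolding W_ext[OF T TT]
    apply (rule seg_cmp[OF G])
    using W_mor[OF T] ip_mor[OF x le] qT by auto
qed

lemma ext_eq:
  assumes pq: "p \<le> q" and T: "deg G l \<le> T" and qT: "q \<le> T"
  shows "ext G l x p q = seg G (Wp G l x T) p q"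
proof -
  let ?M = "\<lambda>i. max (q i) (deg G l i)"
  have h: "deg G l \<le> ?M" "?M \<le> T" "q \<le> ?M" using T qT by (auto simp: le_fun_def)
  show ?thesis unfolding ext_def using pq seg_W[OF h, of p] by simp
qed

lemma ext_ip: "ext G l x \<in> infpaths G"
proof -
  have A: "ext G l x p q \<in> mor G \<and> deg G (ext G l x p q) = (\<lambda>i. q i - p i) \<and>
                     rng G (ext G l x p q) = ext G l x p p \<and> src G (ext G l x p q) = ext G l x q q" if pq: "p \<le> q" for p q
  proof -
    let ?T = "\<lambda>i. max (q i) (deg G l i)"
    have T: "deg G l \<le> ?T" and qT: "q \<le> ?T" by (auto simp: le_fun_def)
    have pT: "p \<le> ?T" using pq qT order_trans by blast
    note W = W_mor[OF T]
    have qW: "q \<le> deg G (Wp G l x ?T)" using W qT by simp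
    show ?thesis
      unfolding ext_eq[OF pq T qT] ext_eq[OF order_refl T pT] ext_eq[OF order_refl T qT]
      using seg_basic[OF G _ pq qW] W by simp
  qed
  have B: "cmp G (ext G l x p q) (ext G l x q t) = ext G l x p t" if pq: "p \<le> q" and qt: "q \<le> t" for p q t
  proof -
    let ?T = "\<lambda>i. max (t i) (deg G l i)"
    have T: "deg G l \<le> ?T" and tT: "t \<le> ?T" by (auto simp: le_fun_def)
    have qT: "q \<le> ?T" using qt tT order_trans by blast
    have pt: "p \<le> t" using pq qt order_trans by blast
    note W = W_mor[OF T]
    have tW: "t \<le> deg G (Wp G l x ?T)" using W tT by simp
    show ?thesis
      unfolding ext_eq[OF pq T qT] ext_eq[OF qt T tT] ext_eq[OF pt T tT]
      using seg_trans[OF G _ pq qt tW] W by simp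
  qed
  have C: "ext G l x p q = undefined" if "\<not> p \<le> q" for p q using that unfolding ext_def by simp
  show ?thesis unfolding infpaths_def using A B C by blast
qed

lemma ext_start: "ext G l x (\<lambda>_. 0) (deg G l) = l"
proof -
  note W = W_mor[OF order_refl]
  have "ext G l x (\<lambda>_. 0) (deg G l) = seg G (Wp G l x (deg G l)) (\<lambda>_. 0) (deg G l)"
    using ext_eq[OF zero_le_fun order_refl order_refl] .
  also have "\<dots> = pre G (Wp G l x (deg G l)) (deg G l)" using seg_zero[OF G] W by simp
  also have "\<dots> = l"
  proof -
    have e: "Wp G l x (deg G l) = cmp G l (src G l)" unfolding Wp_def using xs by simp
    show ?thesis unfolding e using fac_uniq(1)[OF G l, of "src G l"] kg_mor[OF G l] kg_rs[OF G l]
      by simp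
  qed
  finally show ?thesis .
qed

lemma ext_shift: "shift (deg G l) (ext G l x) = x"
proof (intro ext allI)
  fix p q
  show "shift (deg G l) (ext G l x) p q = x p q"
  proof (cases "p \<le> q")
    case True
    let ?T = "\<lambda>i. q i + deg G l i"
    have T: "deg G l \<le> ?T" and qT: "(\<lambda>i. p i + deg G l i) \<le> ?T" using True by (auto simp: le_fun_def)
    have e: "Wp G l x ?T = cmp G l (x (\<lambda>_. 0) q)" unfolding Wp_def by simp
    have m: "x (\<lambda>_. 0) q \<in> mor G \<and> rng G (x (\<lambda>_. 0) q) = src G l \<and> deg G (x (\<lambda>_. 0) q) = q"
      using ip_mor[OF x zero_le_fun] xs by simp
    have "shift (deg G l) (ext G l x) p q = seg G (Wp G l x ?T) (\<lambda>i. p i + deg G l i) ?T"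
      unfolding shift_def using ext_eq[OF qT T order_refl] by simp
    also have "\<dots> = seg G (cmp G l (x (\<lambda>_. 0) q)) (\<lambda>i. deg G l i + p i) (\<lambda>i. deg G l i + q i)"
      unfolding e by (simp add: add.commute)
    also have "\<dots> = seg G (x (\<lambda>_. 0) q) p q"
      using seg_cmp2[OF G l _ _ True] m by simp
    also have "\<dots> = x p q" using seg_ip[OF G x True order_refl] .
    finally show ?thesis .
  next
    case False
    then show ?thesis unfolding shift_def ext_def using ip_undef[OF x False] by (simp add: le_shift_iff)
  qed
qed

lemma ext_unique:
  assumes y: "y \<in> infpaths G" and y0: "y (\<lambda>_. 0) (deg G l) = l" and ys: "shift (deg G l) y = x"
  shows "y = ext G l x"
proof (intro ext allI)
  fix p q
  show "y p q = ext G l x p q"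
  proof (cases "p \<le> q")
    case True
    let ?T = "\<lambda>i. max (q i) (deg G l i)"
    have T: "deg G l \<le> ?T" and qT: "q \<le> ?T" by (auto simp: le_fun_def)
    have a: "y (\<lambda>_. 0) ?T = cmp G (y (\<lambda>_. 0) (deg G l)) (y (deg G l) ?T)" using ip_cmp[OF y zero_le_fun T] by simp
    have b: "y (deg G l) ?T = x (\<lambda>_. 0) (\<lambda>i. ?T i - deg G l i)"
    proof -
      have e1: "(\<lambda>i. (?T i - deg G l i) + deg G l i) = ?T" by (auto simp: max_def)
      have "x (\<lambda>_. 0) (\<lambda>i. ?T i - deg G l i) = shift (deg G l) y (\<lambda>_. 0) (\<lambda>i. ?T i - deg G l i)"
        using ys by simp
      also have "\<dots> = y (\<lambda>i. 0 + deg G l i) (\<lambda>i. (?T i - deg G l i) + deg G l i)"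
        unfolding shift_def by (rule refl)
      also have "\<dots> = y (deg G l) ?T" unfolding e1 by simp
      finally show ?thesis by simp
    qed
    have "y p q = seg G (y (\<lambda>_. 0) ?T) p q" using seg_ip[OF G y True qT] by simp
    also have "\<dots> = seg G (Wp G l x ?T) p q" unfolding a b y0 Wp_def ..
    also have "\<dots> = ext G l x p q" using ext_eq[OF True T qT] by simp
    finally show ?thesis .
  next
    case False
    then show ?thesis unfolding ext_def using ip_undef[OF y False] by simp
  qed
qed

lemma prefix_eq: "prefix G l x = ext G l x"
  unfolding prefix_def
  apply (rule the_equality)
   apply (simp add: ext_ip ext_start ext_shift)
  apply (elim conjE)
  apply (erule (2) ext_unique)
  done

end

lemma comp_measure_facts:
  assumes D: "D \<in> sets M" and inj: "inj_on f D" and img0: "\<forall>A\<in>sets M. A \<subseteq> D \<longrightarrow> f ` A \<in> sets M"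
  shows "sets (comp_measure M D f) = sets (restrict_space M D)"
    and "A \<in> sets (restrict_space M D) \<Longrightarrow> emeasure (comp_measure M D f) A = emeasure M (f ` A)"
proof -
  let ?R = "restrict_space M D"
  have img: "f ` A \<in> sets M" if "A \<in> sets M" "A \<subseteq> D" for A using img0 that by blast
  have DS: "D \<subseteq> space M" using sets.sets_into_space[OF D] .
  have sR: "space ?R = D" using DS by (simp add: space_restrict_space Int_absorb2)
  have iff: "B \<in> sets ?R \<longleftrightarrow> B \<subseteq> D \<and> B \<in> sets M" for B
    using sets_restrict_space_iff[of D M B] D DS by (simp add: Int_absorb2)
  have sa: "sigma_algebra D (sets ?R)" using sets.sigma_algebra_axioms[of ?R] sR by simp
  have pow: "sets ?R \<subseteq> Pow D" using iff by auto
  show "sets (comp_measure M D f) = sets ?R"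
    unfolding comp_measure_def using sets_measure_of[OF pow] sigma_algebra.sigma_sets_eq[OF sa] by simp
  have pos: "positive (sets ?R) (\<lambda>A. emeasure M (f ` A))" unfolding positive_def by simp
  have ca: "countably_additive (sets ?R) (\<lambda>A. emeasure M (f ` A))"
    unfolding countably_additive_def
  proof (intro allI impI)
    fix A :: "nat \<Rightarrow> _" assume r: "range A \<subseteq> sets ?R" and dj: "disjoint_family A" and u: "\<Union> (range A) \<in> sets ?R"
    have AD: "A i \<subseteq> D" "A i \<in> sets M" for i using r iff by auto
    have r2: "range (\<lambda>i. f ` A i) \<subseteq> sets M" using AD img by auto
    have dj2: "disjoint_family (\<lambda>i. f ` A i)"
      unfolding disjoint_family_on_def
    proof (intro ballI impI)
      fix i j :: nat assume "i \<noteq> j"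
      then have "A i \<inter> A j = {}" using dj unfolding disjoint_family_on_def by auto
      then show "f ` A i \<inter> f ` A j = {}" using inj AD unfolding inj_on_def by blast
    qed
    have "(\<Sum>i. emeasure M (f ` A i)) = emeasure M (\<Union>i. f ` A i)" by (rule suminf_emeasure[OF r2 dj2])
    then show "(\<Sum>i. emeasure M (f ` A i)) = emeasure M (f ` \<Union> (range A))" by (simp add: image_UN)
  qed
  assume A: "A \<in> sets ?R"
  show "emeasure (comp_measure M D f) A = emeasure M (f ` A)"
    unfolding comp_measure_def by (rule emeasure_measure_of_sigma[OF sa pos ca A])
qed

lemma RN_pos_iff:
  assumes M: "sigma_finite_measure M" and sN: "sets N = sets M"
  shows "(absolutely_continuous M N \<and> (AE x in M. RN_deriv M N x > 0)) \<longleftrightarrow>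
         (\<forall>A\<in>sets M. emeasure M A = 0 \<longleftrightarrow> emeasure N A = 0)"
proof
  assume h: "absolutely_continuous M N \<and> (AE x in M. RN_deriv M N x > 0)"
  have dens: "density M (RN_deriv M N) = N" using sigma_finite_measure.density_RN_deriv[OF M] h sN by blast
  show "\<forall>A\<in>sets M. emeasure M A = 0 \<longleftrightarrow> emeasure N A = 0"
  proof (intro ballI iffI)
    fix A assume A: "A \<in> sets M" and "emeasure M A = 0"
    then have "A \<in> null_sets M" by (intro null_setsI)
    then have "A \<in> null_sets N" using h unfolding absolutely_continuous_def by blast
    then show "emeasure N A = 0" by (rule null_setsD1)
  next
    fix A assume A: "A \<in> sets M" and z: "emeasure N A = 0"
    have "(\<integral>\<^sup>+ x. RN_deriv M N x * indicator A x \<partial>M) = 0"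
      using z emeasure_density[of "RN_deriv M N" M A] A dens by simp
    moreover have mb: "(\<lambda>x. RN_deriv M N x * indicator A x) \<in> borel_measurable M" using A by measurable
    ultimately have z0: "AE x in M. RN_deriv M N x * indicator A x = 0"
      using nn_integral_0_iff_AE[OF mb] by simp
    have ae: "AE x in M. x \<notin> A" using z0 h[THEN conjunct2]
      by eventually_elim (auto simp: indicator_def split: if_splits)
    have eq: "{x\<in>space M. \<not> x \<notin> A} = A" using sets.sets_into_space[OF A] by auto
    show "emeasure M A = 0" using AE_iff_measurable[OF A eq] ae by (simp only:)
  qed
next
  assume h: "\<forall>A\<in>sets M. emeasure M A = 0 \<longleftrightarrow> emeasure N A = 0"
  have ac: "absolutely_continuous M N"
    unfolding absolutely_continuous_def using h sN by auto
  have dens: "density M (RN_deriv M N) = N" using sigma_finite_measure.density_RN_deriv[OF M ac sN] .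
  let ?Z = "{x\<in>space M. RN_deriv M N x = 0}"
  have Z: "?Z \<in> sets M" by measurable
  have mbZ: "(\<lambda>x. RN_deriv M N x * indicator ?Z x) \<in> borel_measurable M" using Z by measurable
  have "(\<integral>\<^sup>+ x. RN_deriv M N x * indicator ?Z x \<partial>M) = 0"
    unfolding nn_integral_0_iff_AE[OF mbZ] by (auto simp: indicator_def)
  then have "emeasure N ?Z = 0" using emeasure_density[of "RN_deriv M N" M ?Z] Z dens by simp
  then have "emeasure M ?Z = 0" using h Z by blast
  then have "AE x in M. RN_deriv M N x \<noteq> 0" using AE_iff_measurable[OF Z, of "\<lambda>x. RN_deriv M N x \<noteq> 0"] by simp
  then have "AE x in M. RN_deriv M N x > 0" by eventually_elim (simp add: zero_less_iff_neq_zero)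
  with ac show "absolutely_continuous M N \<and> (AE x in M. RN_deriv M N x > 0)" by blast
qed

lemma cyl_src: "is_kgraph G \<Longrightarrow> l \<in> mor G \<Longrightarrow> cyl G (src G l) = {x \<in> infpaths G. x (\<lambda>_. 0) (\<lambda>_. 0) = src G l}"
  using deg_src[of G l] unfolding cyl_def by simp

lemma cyl_rng: "x \<in> cyl G l \<Longrightarrow> x (\<lambda>_. 0) (\<lambda>_. 0) = rng G l"
proof -
  assume x: "x \<in> cyl G l"
  then have xi: "x \<in> infpaths G" and x0: "x (\<lambda>_. 0) (deg G l) = l" unfolding cyl_def by auto
  have "rng G (x (\<lambda>_. 0) (deg G l)) = x (\<lambda>_. 0) (\<lambda>_. 0)" using ip_mor[OF xi zero_le_fun, of "deg G l"] by blast
  then show ?thesis using x0 by simp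
qed

lemma prefix_props:
  assumes G: "is_kgraph G" and l: "l \<in> mor G" and x: "x \<in> cyl G (src G l)"
  shows "prefix G l x \<in> cyl G l" "shift (deg G l) (prefix G l x) = x"
proof -
  have xi: "x \<in> infpaths G" "x (\<lambda>_. 0) (\<lambda>_. 0) = src G l" using x cyl_src[OF G l] by auto
  interpret ext_ctx G l x using G l xi by unfold_locales
  show "prefix G l x \<in> cyl G l" "shift (deg G l) (prefix G l x) = x"
    unfolding prefix_eq cyl_def using ext_ip ext_start ext_shift by auto
qed

lemma prefix_of:
  assumes G: "is_kgraph G" and l: "l \<in> mor G" and y: "y \<in> cyl G l"
  shows "shift (deg G l) y \<in> cyl G (src G l)" "prefix G l (shift (deg G l) y) = y"
proof -
  have yi: "y \<in> infpaths G" "y (\<lambda>_. 0) (deg G l) = l" using y unfolding cyl_def by auto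
  have s0: "shift (deg G l) y (\<lambda>_. 0) (\<lambda>_. 0) = src G l"
    unfolding shift_def using ip_mor[OF yi(1) zero_le_fun, of "deg G l"] yi(2) by simp
  show c: "shift (deg G l) y \<in> cyl G (src G l)" unfolding cyl_src[OF G l] using shift_ip[OF yi(1)] s0 by simp
  interpret ext_ctx G l "shift (deg G l) y" using G l shift_ip[OF yi(1)] s0 by unfold_locales
  show "prefix G l (shift (deg G l) y) = y" unfolding prefix_eq using ext_unique[OF yi refl] by simp
qed

lemma prefix_image:
  assumes G: "is_kgraph G" and l: "l \<in> mor G" and A: "A \<subseteq> cyl G (src G l)"
  shows "prefix G l ` A = {y \<in> cyl G l. shift (deg G l) y \<in> A}"
proof
  show "prefix G l ` A \<subseteq> {y \<in> cyl G l. shift (deg G l) y \<in> A}"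
    using prefix_props[OF G l] A by auto
  show "{y \<in> cyl G l. shift (deg G l) y \<in> A} \<subseteq> prefix G l ` A"
  proof
    fix y assume "y \<in> {y \<in> cyl G l. shift (deg G l) y \<in> A}"
    then have y: "y \<in> cyl G l" "shift (deg G l) y \<in> A" by auto
    show "y \<in> prefix G l ` A" using prefix_of(2)[OF G l y(1)] y(2) by (intro image_eqI[of y _ "shift (deg G l) y"]) auto
  qed
qed

lemma prefix_inj:
  assumes G: "is_kgraph G" and l: "l \<in> mor G"
  shows "inj_on (prefix G l) (cyl G (src G l))"
  unfolding inj_on_def
proof (intro ballI impI)
  fix a b assume a: "a \<in> cyl G (src G l)" and b: "b \<in> cyl G (src G l)" and e: "prefix G l a = prefix G l b"
  have "a = shift (deg G l) (prefix G l a)" using prefix_props(2)[OF G l a] by simp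
  also have "\<dots> = shift (deg G l) (prefix G l b)" using e by simp
  also have "\<dots> = b" using prefix_props(2)[OF G l b] by simp
  finally show "a = b" .
qed

lemma prefix_range: "is_kgraph G \<Longrightarrow> l \<in> mor G \<Longrightarrow> prefix G l ` cyl G (src G l) = cyl G l"
  using prefix_image[of G l "cyl G (src G l)"] prefix_of[of G l] by auto

lemma prefix_comp:
  assumes G: "is_kgraph G" and l: "l \<in> mor G" and n: "n \<in> mor G" and ln: "src G l = rng G n"
    and x: "x \<in> cyl G (src G n)"
  shows "prefix G l (prefix G n x) = prefix G (cmp G l n) x"
proof -
  let ?y = "prefix G n x"
  have y: "?y \<in> cyl G n" "shift (deg G n) ?y = x" using prefix_props[OF G n x] by auto
  have y0: "?y (\<lambda>_. 0) (\<lambda>_. 0) = src G l" using cyl_rng[OF y(1)] ln by simp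
  have ys: "?y \<in> cyl G (src G l)" unfolding cyl_src[OF G l] using y0 y(1) unfolding cyl_def by auto
  let ?z = "prefix G l ?y"
  have z: "?z \<in> cyl G l" "shift (deg G l) ?z = ?y" using prefix_props[OF G l ys] by auto
  note c = kg_cmp[OF G l n ln]
  have zi: "?z \<in> infpaths G" using z unfolding cyl_def by auto
  have le1: "deg G l \<le> (\<lambda>i. deg G l i + deg G n i)" by (simp add: le_fun_def)
  have "?z (\<lambda>_. 0) (\<lambda>i. deg G l i + deg G n i) = cmp G (?z (\<lambda>_. 0) (deg G l)) (?z (deg G l) (\<lambda>i. deg G l i + deg G n i))"
    using ip_cmp[OF zi zero_le_fun le1] by simp
  also have "?z (\<lambda>_. 0) (deg G l) = l" using z unfolding cyl_def by auto
  also have "?z (deg G l) (\<lambda>i. deg G l i + deg G n i) = ?y (\<lambda>_. 0) (deg G n)"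
  proof -
    have "?y (\<lambda>_. 0) (deg G n) = shift (deg G l) ?z (\<lambda>_. 0) (deg G n)" using z by simp
    also have "\<dots> = ?z (deg G l) (\<lambda>i. deg G l i + deg G n i)" unfolding shift_def by (simp add: add.commute)
    finally show ?thesis by simp
  qed
  also have "?y (\<lambda>_. 0) (deg G n) = n" using y unfolding cyl_def by auto
  finally have zc: "?z \<in> cyl G (cmp G l n)" using zi c unfolding cyl_def by simp
  have "shift (deg G (cmp G l n)) ?z = shift (deg G n) (shift (deg G l) ?z)"
    using c by (simp add: shift_shift add.commute)
  also have "\<dots> = x" using z y by simp
  finally have "shift (deg G (cmp G l n)) ?z = x" .
  then show ?thesis using prefix_of(2)[OF G _ zc] c by simp
qed

lemma prefix_vertex:
  assumes G: "is_kgraph G" and v: "v \<in> mor G" and rv: "rng G v = v" and x: "x \<in> cyl G v"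
  shows "prefix G v x = x"
  using prefix_of(2)[OF G v x] unfolding vert_deg[OF G v rv] shift_zero .

lemma conn_lemma:
  assumes P: "prob_space P" and D: "D \<in> sets P" and inj: "inj_on f D"
    and img: "\<And>A. A \<in> sets P \<Longrightarrow> A \<subseteq> D \<Longrightarrow> f ` A \<in> sets P"
  shows "(absolutely_continuous (restrict_space P D) (comp_measure P D f) \<and>
          (AE x in restrict_space P D. RN_deriv (restrict_space P D) (comp_measure P D f) x > 0)) \<longleftrightarrow>
         (\<forall>A\<in>sets P. A \<subseteq> D \<longrightarrow> (emeasure P A = 0 \<longleftrightarrow> emeasure P (f ` A) = 0))"
proof -
  let ?R = "restrict_space P D"
  have sf: "sigma_finite_measure ?R"
    by (rule sigma_finite_measure_restrict_space[OF prob_space_imp_sigma_finite[OF P] D])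
  have img0: "\<forall>A\<in>sets P. A \<subseteq> D \<longrightarrow> f ` A \<in> sets P" using img by blast
  note cf = comp_measure_facts[OF D inj img0]
  have DS: "D \<subseteq> space P" using sets.sets_into_space[OF D] .
  have iff: "B \<in> sets ?R \<longleftrightarrow> B \<subseteq> D \<and> B \<in> sets P" for B
    using sets_restrict_space_iff[of D P B] D DS by (simp add: Int_absorb2)
  have em: "B \<in> sets ?R \<Longrightarrow> emeasure ?R B = emeasure P B" for B
    using emeasure_restrict_space[of D P B] D DS iff by (simp add: Int_absorb2)
  show ?thesis
    unfolding RN_pos_iff[OF sf cf(1)]
  proof
    assume H: "\<forall>A\<in>sets ?R. (emeasure ?R A = 0) = (emeasure (comp_measure P D f) A = 0)"
    show "\<forall>A\<in>sets P. A \<subseteq> D \<longrightarrow> (emeasure P A = 0) = (emeasure P (f ` A) = 0)"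
    proof (intro ballI impI)
      fix A assume A: "A \<in> sets P" "A \<subseteq> D"
      have AR: "A \<in> sets ?R" using iff A by blast
      show "(emeasure P A = 0) = (emeasure P (f ` A) = 0)"
        using H[rule_format, OF AR] em[OF AR] cf(2)[OF AR] by simp
    qed
  next
    assume H: "\<forall>A\<in>sets P. A \<subseteq> D \<longrightarrow> (emeasure P A = 0) = (emeasure P (f ` A) = 0)"
    show "\<forall>A\<in>sets ?R. (emeasure ?R A = 0) = (emeasure (comp_measure P D f) A = 0)"
    proof
      fix A assume AR: "A \<in> sets ?R"
      have A: "A \<in> sets P" "A \<subseteq> D" using iff AR by blast+
      show "(emeasure ?R A = 0) = (emeasure (comp_measure P D f) A = 0)"
        using H[rule_format, OF A] em[OF AR] cf(2)[OF AR] by simp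
    qed
  qed
qed

lemma finite_sum_lt:
  fixes f g :: "'k::finite \<Rightarrow> nat"
  assumes "\<And>j. f j \<le> g j" "f i < g i"
  shows "sum f UNIV < sum g UNIV"
  using sum_strict_mono_ex1[of UNIV f g] assms by auto

theorem mainTheorem6:
  fixes G :: "('a, 'k::finite) kgraph" and P :: "('a, 'k) ipath measure"
  assumes "is_kgraph G" and "finite_kgraph G" and "no_sources G" and "strongly_connected G"
    and "prob_space P" and "space P = infpaths G" and "sets P = path_sets G"
    and "\<forall>l\<in>mor G. prefix G l \<in> restrict_space P (cyl G (src G l)) \<rightarrow>\<^sub>M P"
    and "\<forall>n. shift n \<in> P \<rightarrow>\<^sub>M P"
    and "\<forall>v\<in>vertices G. emeasure P (cyl G v) > 0"
    and "\<forall>l\<in>edges G.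
           absolutely_continuous (restrict_space P (cyl G (src G l)))
             (comp_measure P (cyl G (src G l)) (prefix G l)) \<and>
           (AE x in restrict_space P (cyl G (src G l)).
              RN_deriv (restrict_space P (cyl G (src G l)))
                (comp_measure P (cyl G (src G l)) (prefix G l)) x > 0)"
  shows "Lambda_sbfs G P (\<lambda>l. cyl G (src G l)) (prefix G) shift"
proof -
  note G = assms(1) and fin = assms(2) and P = assms(5) and sp = assms(6) and ss = assms(7)
    and pm = assms(8) and shm = assms(9) and pos = assms(10) and rn = assms(11)
  have cylS: "cyl G l \<in> sets P" if "l \<in> mor G" for l
    using ss that unfolding path_sets_def by (auto intro: sigma_sets.Basic)
  have srcM: "src G l \<in> mor G" if "l \<in> mor G" for l using kg_mor[OF G that] by simp
  have img: "prefix G l ` A \<in> sets P" if l: "l \<in> mor G" and A: "A \<in> sets P" "A \<subseteq> cyl G (src G l)" for l A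
  proof -
    have "prefix G l ` A = cyl G l \<inter> (shift (deg G l) -` A \<inter> space P)"
      unfolding prefix_image[OF G l A(2)] sp cyl_def by auto
    moreover have "shift (deg G l) -` A \<inter> space P \<in> sets P" using measurable_sets[OF shm[rule_format] A(1)] .
    ultimately show ?thesis using cylS[OF l] by auto
  qed
  define NE where "NE l \<longleftrightarrow> (\<forall>A\<in>sets P. A \<subseteq> cyl G (src G l) \<longrightarrow> (emeasure P A = 0 \<longleftrightarrow> emeasure P (prefix G l ` A) = 0))" for l
  have conn: "(absolutely_continuous (restrict_space P (cyl G (src G l))) (comp_measure P (cyl G (src G l)) (prefix G l)) \<and>
          (AE x in restrict_space P (cyl G (src G l)). RN_deriv (restrict_space P (cyl G (src G l))) (comp_measure P (cyl G (src G l)) (prefix G l)) x > 0))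
          \<longleftrightarrow> NE l" if l: "l \<in> mor G" for l
    unfolding NE_def
    by (rule conn_lemma[OF P cylS[OF srcM[OF l]] prefix_inj[OF G l] img[OF l]])
  have edge_mor: "l \<in> edges G \<Longrightarrow> l \<in> mor G" for l unfolding edges_def paths_of_deg_def by auto
  have NE_edge: "NE l" if "l \<in> edges G" for l using rn that conn[OF edge_mor[OF that]] by blast
  have NE_all: "\<forall>l. l \<in> mor G \<longrightarrow> sum (deg G l) UNIV = s \<longrightarrow> NE l" for s
  proof (induction s rule: less_induct)
    case (less s)
    show ?case
    proof (intro allI impI)
      fix l assume l: "l \<in> mor G" and sl: "sum (deg G l) UNIV = s"
      show "NE l"
      proof (cases "deg G l = (\<lambda>_. 0)")
        case True
        note v = deg0_vertex[OF G l True]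
        show ?thesis unfolding NE_def
        proof (intro ballI impI)
          fix A assume "A \<subseteq> cyl G (src G l)"
          then have "\<forall>x\<in>A. prefix G l x = x" using prefix_vertex[OF G l v(1)] v(2) by auto
          then have "prefix G l ` A = (\<lambda>x. x) ` A" by (intro image_cong) auto
          then have "prefix G l ` A = A" by simp
          then show "(emeasure P A = 0) = (emeasure P (prefix G l ` A) = 0)" by simp
        qed
      next
        case False
        then obtain i where "deg G l i \<noteq> 0" by (auto simp: fun_eq_iff)
        then have di: "deg G l i > 0" by simp
        let ?e = "basis_deg i"
        have ei: "?e \<le> deg G l" using di by (auto simp: le_fun_def basis_deg_def)
        note f = fac_spec[OF G l ei]
        let ?a = "pre G l ?e" and ?b = "suf G l ?e"
        have ae: "?a \<in> edges G" unfolding edges_def paths_of_deg_def using f by auto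
        have bs: "sum (deg G ?b) UNIV < s"
          unfolding sl[symmetric] using f di by (intro finite_sum_lt[of _ _ i]) (auto simp: basis_deg_def)
        have NEb: "NE ?b" using less.IH[OF bs] f by blast
        have NEa: "NE ?a" using NE_edge[OF ae] .
        have sb0: "src G (cmp G ?a ?b) = src G ?b" using kg_cmp[OF G, of ?a ?b] f by blast
        have sb: "src G l = src G ?b" using sb0 f by simp
        show "NE l" unfolding NE_def
        proof (intro ballI impI)
          fix A assume A: "A \<in> sets P" "A \<subseteq> cyl G (src G l)"
          have Ab: "A \<subseteq> cyl G (src G ?b)" using A sb by simp
          have e1: "prefix G l ` A = prefix G ?a ` (prefix G ?b ` A)"
          proof -
            have "prefix G l x = prefix G ?a (prefix G ?b x)" if "x \<in> A" for x
              using prefix_comp[OF G _ _ _ , of ?a ?b x] f Ab that by auto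
            then show ?thesis by (auto simp: image_image intro!: image_cong)
          qed
          have Bm: "prefix G ?b ` A \<in> sets P" using img[of ?b A] f A Ab by simp
          have Bs: "prefix G ?b ` A \<subseteq> cyl G (src G ?a)"
          proof
            fix y assume "y \<in> prefix G ?b ` A"
            then have y: "y \<in> cyl G ?b" using prefix_props(1)[OF G _ ] f Ab by blast
            then show "y \<in> cyl G (src G ?a)" using cyl_src[OF G, of ?a] f cyl_rng[OF y] unfolding cyl_def by auto
          qed
          have "(emeasure P A = 0) = (emeasure P (prefix G ?b ` A) = 0)" using NEb A Ab unfolding NE_def by blast
          also have "\<dots> = (emeasure P (prefix G ?a ` (prefix G ?b ` A)) = 0)" using NEa Bm Bs unfolding NE_def by blast
          finally show "(emeasure P A = 0) = (emeasure P (prefix G l ` A) = 0)" using e1 by simp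
        qed
      qed
    qed
  qed
  have NE: "NE l" if "l \<in> mor G" for l using NE_all that by blast
  have pmor: "l \<in> paths_of_deg G m \<Longrightarrow> l \<in> mor G" for l m unfolding paths_of_deg_def by auto
  have cover: "(\<Union>l\<in>paths_of_deg G m. prefix G l ` cyl G (src G l)) = space P" for m
  proof
    show "(\<Union>l\<in>paths_of_deg G m. prefix G l ` cyl G (src G l)) \<subseteq> space P"
    proof
      fix y assume "y \<in> (\<Union>l\<in>paths_of_deg G m. prefix G l ` cyl G (src G l))"
      then obtain l where l: "l \<in> paths_of_deg G m" and y: "y \<in> prefix G l ` cyl G (src G l)" by blast
      have "y \<in> cyl G l" using y prefix_range[OF G pmor[OF l]] by simp
      then show "y \<in> space P" unfolding sp cyl_def by simp
    qed
    show "space P \<subseteq> (\<Union>l\<in>paths_of_deg G m. prefix G l ` cyl G (src G l))"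
    proof
      fix y assume y: "y \<in> space P"
      have yi: "y \<in> infpaths G" using y sp by simp
      have im: "y (\<lambda>_. 0) m \<in> mor G" "deg G (y (\<lambda>_. 0) m) = m" using ip_mor[OF yi zero_le_fun, of m] by simp_all
      have "y (\<lambda>_. 0) m \<in> paths_of_deg G m" using im unfolding paths_of_deg_def by simp
      moreover have "y \<in> cyl G (y (\<lambda>_. 0) m)" using im yi unfolding cyl_def by simp
      moreover have "prefix G (y (\<lambda>_. 0) m) ` cyl G (src G (y (\<lambda>_. 0) m)) = cyl G (y (\<lambda>_. 0) m)"
        by (rule prefix_range[OF G im(1)])
      ultimately show "y \<in> (\<Union>l\<in>paths_of_deg G m. prefix G l ` cyl G (src G l))"
        by (intro UN_I[of "y (\<lambda>_. 0) m"]) simp_all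
    qed
  qed
  have disj: "prefix G l ` cyl G (src G l) \<inter> prefix G l' ` cyl G (src G l') = {}"
    if "l \<in> paths_of_deg G m" "l' \<in> paths_of_deg G m" "l \<noteq> l'" for l l' m
  proof -
    have "prefix G l ` cyl G (src G l) = cyl G l" by (rule prefix_range[OF G pmor[OF that(1)]])
    moreover have "prefix G l' ` cyl G (src G l') = cyl G l'" by (rule prefix_range[OF G pmor[OF that(2)]])
    moreover have "deg G l = m" "deg G l' = m" using that unfolding paths_of_deg_def by simp_all
    moreover have "cyl G l \<inter> cyl G l' = {}" if "deg G l = deg G l'"
      using that \<open>l \<noteq> l'\<close> unfolding cyl_def by auto
    ultimately show ?thesis by simp
  qed
  have part1: "sbfs P (paths_of_deg G m) (\<lambda>l. cyl G (src G l)) (prefix G) \<and>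
      coding_map (paths_of_deg G m) (\<lambda>l. cyl G (src G l)) (prefix G) (shift m)" for m
  proof
    show "sbfs P (paths_of_deg G m) (\<lambda>l. cyl G (src G l)) (prefix G)"
      unfolding sbfs_def
    proof (intro conjI ballI impI)
      show "finite (paths_of_deg G m)" using fin unfolding finite_kgraph_def by blast
      fix l assume l: "l \<in> paths_of_deg G m"
      note lm = pmor[OF l]
      show "cyl G (src G l) \<in> sets P" using cylS[OF srcM[OF lm]] .
      show "prefix G l \<in> restrict_space P (cyl G (src G l)) \<rightarrow>\<^sub>M P" using pm lm by blast
      show "prefix G l ` A \<in> sets P" if "A \<in> sets P" "A \<subseteq> cyl G (src G l)" for A using img[OF lm that] .
      show "absolutely_continuous (restrict_space P (cyl G (src G l))) (comp_measure P (cyl G (src G l)) (prefix G l))"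
        using conn[OF lm] NE[OF lm] by blast
      show "AE x in restrict_space P (cyl G (src G l)). 0 < RN_deriv (restrict_space P (cyl G (src G l))) (comp_measure P (cyl G (src G l)) (prefix G l)) x"
        using conn[OF lm] NE[OF lm] by blast
    next
      show "emeasure P (space P - (\<Union>l\<in>paths_of_deg G m. prefix G l ` cyl G (src G l))) = 0"
        using cover by simp
    next
      fix l l' assume "l \<in> paths_of_deg G m" "l' \<in> paths_of_deg G m" "l \<noteq> l'"
      then show "emeasure P (prefix G l ` cyl G (src G l) \<inter> prefix G l' ` cyl G (src G l')) = 0"
        using disj by simp
    qed
    show "coding_map (paths_of_deg G m) (\<lambda>l. cyl G (src G l)) (prefix G) (shift m)"
      unfolding coding_map_def
    proof (intro ballI)
      fix l x assume l: "l \<in> paths_of_deg G m" and x: "x \<in> cyl G (src G l)"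
      then show "shift m (prefix G l x) = x" using prefix_props(2)[OF G pmor[OF l] x] l
        unfolding paths_of_deg_def by auto
    qed
  qed
  have part2: "\<forall>v\<in>vertices G. (\<forall>x\<in>cyl G (src G v). prefix G v x = x) \<and> emeasure P (cyl G (src G v)) > 0"
  proof
    fix v assume v: "v \<in> vertices G"
    then have vm: "v \<in> mor G" and rv: "rng G v = v" unfolding vertices_def by auto
    have sv: "src G v = v" using kg_rs[OF G vm] rv by simp
    show "(\<forall>x\<in>cyl G (src G v). prefix G v x = x) \<and> emeasure P (cyl G (src G v)) > 0"
      using prefix_vertex[OF G vm rv] pos v sv by auto
  qed
  have part3: "\<forall>l\<in>mor G. \<forall>n\<in>mor G. src G l = rng G n \<longrightarrow>
        (AE x in P. x \<in> prefix G n ` cyl G (src G n) \<longrightarrow> x \<in> cyl G (src G l)) \<and>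
        (AE x in P. x \<in> cyl G (src G n) \<longrightarrow> prefix G l (prefix G n x) = prefix G (cmp G l n) x)"
  proof (intro ballI impI conjI)
    fix l n assume l: "l \<in> mor G" and n: "n \<in> mor G" and ln: "src G l = rng G n"
    show "AE x in P. x \<in> prefix G n ` cyl G (src G n) \<longrightarrow> x \<in> cyl G (src G l)"
    proof (rule AE_I2, intro impI)
      fix x assume "x \<in> prefix G n ` cyl G (src G n)"
      then have x: "x \<in> cyl G n" using prefix_range[OF G n] by simp
      then show "x \<in> cyl G (src G l)" using cyl_src[OF G l] cyl_rng[OF x] ln unfolding cyl_def by auto
    qed
    show "AE x in P. x \<in> cyl G (src G n) \<longrightarrow> prefix G l (prefix G n x) = prefix G (cmp G l n) x"
      using prefix_comp[OF G l n ln] by (intro AE_I2) blast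
  qed
  have part4: "\<forall>m n. \<forall>x\<in>space P. shift m (shift n x) = shift (\<lambda>i. m i + n i) x"
    by (simp add: shift_shift)
  show ?thesis unfolding Lambda_sbfs_def
    apply (intro conjI)
       apply (rule allI, rule part1)
      apply (rule part2)
     apply (rule part3)
    apply (rule part4)
    done
qed

end
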